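(* Let $M\ge2$ be an integer, $\tau=\tau_M$, and let $U_0,\dots,U_{M-1}$, $V_0,\dots,V_{M-1}$ be non-negative real numbers. Then $$\sum_{\mu=0}^{2M-2}\ \max_{\substack{\kappa+\lambda=\mu\\0\le\kappa,\lambda\le M-1}}(U_\kappa V_\lambda)^\tau\ge\left(\sum_{\kappa=0}^{M-1}U_\kappa\right)^\tau\left(\sum_{\lambda=0}^{M-1}V_\lambda\right)^\tau.$$
   Context: $\tau_M$ is the positive solution of $(1/M)^{2\tau}+((M-1)/M)^\tau=1$. *)

theory Defs
  imports "HOL-Analysis.Analysis"
begin

definition tau :: "nat \<Rightarrow> real" where
  "tau M = (THE t. t > 0 \<and> (1 / real M) powr (2 * t) + ((real M - 1) / real M) powr t = 1)"

end

theory Submission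
  imports Defs "HOL-Library.Multiset"
begin

lemma h_ineq:
  fixes t c x :: real
  assumes t1: "1/2 \<le> t" and t2: "t < 1" and c0: "0 < c" and c1: "c < 1"
    and ceq: "c powr (2*t) + (1-c) powr t = 1"
    and x0: "c \<le> x" and x1: "x \<le> 1"
  shows "1 \<le> x powr (2*t) + (1-x) powr t"
proof (rule ccontr)
  assume neg: "\<not> 1 \<le> x powr (2*t) + (1-x) powr t"
  define k where "k = (\<lambda>x::real. x powr (2*t) + (1-x) powr t)"
  define k' where "k' = (\<lambda>x::real. 2*t * x powr (2*t-1) - t * (1-x) powr (t-1))"
  have tpos: "t > 0" using t1 by simp
  have deriv: "(k has_real_derivative k' y) (at y)" if "0 < y" "y < 1" for y
    using that tpos unfolding k_def k'_def
    by (auto intro!: derivative_eq_intros)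
  have diff: "k differentiable (at y)" if "0 < y" "y < 1" for y
    using deriv[OF that] real_differentiable_def by blast
  have cont: "continuous_on {0..1} k"
    unfolding k_def using tpos
    by (intro continuous_intros continuous_on_powr') auto
  have k0: "k 0 = 1" and k1: "k 1 = 1" and kc: "k c = 1" using ceq by (auto simp: k_def)
  have kx: "k x < 1" using neg by (auto simp: k_def)
  have cx: "c < x" using kx kc x0 by (cases "c = x") auto
  have x1': "x < 1" using kx k1 x1 by (cases "x = 1") auto
  have mvt: "\<exists>z. a < z \<and> z < b \<and> k b - k a = (b - a) * k' z" if "0 \<le> a" "a < b" "b \<le> 1" for a b
  proof -
    have ck: "continuous_on {a..b} k" by (rule continuous_on_subset[OF cont]) (use that in auto)
    have dk: "k differentiable (at y)" if "a < y" "y < b" for y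
    proof (rule diff)
      show "0 < y" using that \<open>0 \<le> a\<close> by linarith
      show "y < 1" using that \<open>b \<le> 1\<close> by linarith
    qed
    obtain l z where "a < z" "z < b" "DERIV k z :> l" "k b - k a = (b - a) * l"
      using MVT[OF \<open>a < b\<close> ck dk] by blast
    moreover have "l = k' z" using DERIV_unique[OF \<open>DERIV k z :> l\<close> deriv] \<open>a<z\<close> \<open>z<b\<close> that by auto
    ultimately show ?thesis by auto
  qed
  obtain z1 where z1a: "0 < z1" "z1 < c" and z1b: "k c - k 0 = (c - 0) * k' z1"
    using mvt[of 0 c] c0 c1 by auto
  have "c * k' z1 = 0" using z1b k0 kc by simp
  then have z1: "0 < z1" "z1 < c" "k' z1 = 0" using z1a c0 by auto
  obtain z2 where z2a: "c < z2" "z2 < x" and z2b: "k x - k c = (x - c) * k' z2"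
    using mvt[of c x] c0 cx x1' by auto
  have "(x - c) * k' z2 < 0" using z2b kx kc by linarith
  then have z2: "c < z2" "z2 < x" "k' z2 < 0" using z2a cx by (auto simp: mult_less_0_iff)
  obtain z3 where z3a: "x < z3" "z3 < 1" and z3b: "k 1 - k x = (1 - x) * k' z3"
    using mvt[of x 1] c0 cx x1' by auto
  have "(1 - x) * k' z3 > 0" using z3b kx k1 by linarith
  then have z3: "x < z3" "z3 < 1" "k' z3 > 0" using z3a x1' by (auto simp: zero_less_mult_iff)
  define P where "P = (\<lambda>y::real. ln 2 + (2*t-1) * ln y - (t-1) * ln (1-y))"
  have kform: "k' y = t * (exp (ln 2 + (2*t-1) * ln y) - exp ((t-1) * ln (1-y)))"
    if "0 < y" "y < 1" for y
  proof -
    have "exp (ln 2 + (2*t-1) * ln y) = 2 * y powr (2*t-1)" using that by (simp add: exp_add powr_def)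
    moreover have "exp ((t-1) * ln (1-y)) = (1-y) powr (t-1)" using that by (simp add: powr_def)
    ultimately show ?thesis by (simp add: k'_def algebra_simps)
  qed
  have sgn0: "P y = 0" if "0 < y" "y < 1" "k' y = 0" for y
  proof -
    have "exp (ln 2 + (2*t-1) * ln y) = exp ((t-1) * ln (1-y))"
      using kform[OF that(1,2)] that(3) tpos by simp
    then show ?thesis unfolding P_def by simp
  qed
  have sgnneg: "P y < 0" if "0 < y" "y < 1" "k' y < 0" for y
  proof -
    have "exp (ln 2 + (2*t-1) * ln y) < exp ((t-1) * ln (1-y))"
      using kform[OF that(1,2)] that(3) tpos by (simp add: mult_less_0_iff)
    then show ?thesis unfolding P_def by simp
  qed
  have sgnpos: "P y > 0" if "0 < y" "y < 1" "k' y > 0" for y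
  proof -
    have "exp (ln 2 + (2*t-1) * ln y) > exp ((t-1) * ln (1-y))"
      using kform[OF that(1,2)] that(3) tpos by (simp add: zero_less_mult_iff)
    then show ?thesis unfolding P_def by simp
  qed
  have P1: "P z1 = 0" using sgn0 z1 c1 by auto
  have P2: "P z2 < 0" using sgnneg z2 c0 cx x1' by auto
  have P3: "P z3 > 0" using sgnpos z3 c0 cx by auto
  define th where "th = (z3 - z2) / (z3 - z1)"
  have z13: "z1 < z3" using z1 z2 z3 cx by linarith
  have th0: "0 < th" and th1: "th < 1" using z1 z2 z3 cx unfolding th_def by (auto simp: field_simps)
  have thm1: "th * (z3 - z1) = z3 - z2" using z13 unfolding th_def by simp
  have "th * z1 + (1 - th) * z3 = z3 - th * (z3 - z1)" by (simp add: algebra_simps)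
  then have z2eq: "z2 = th * z1 + (1 - th) * z3" using thm1 by linarith
  have lnc: "th * ln a + (1-th) * ln b \<le> ln (th * a + (1-th) * b)" if "0<a" "0<b" for a b
    using ln_concave th0 th1 that unfolding concave_on_iff by (auto)
  have L1: "th * ln z1 + (1-th) * ln z3 \<le> ln z2"
    using lnc[of z1 z3] z1 z3 z2eq cx by auto
  have "1 - z2 = th * (1 - z1) + (1-th) * (1 - z3)" using z2eq by (simp add: algebra_simps)
  then have L2: "th * ln (1-z1) + (1-th) * ln (1-z3) \<le> ln (1-z2)"
    using lnc[of "1-z1" "1-z3"] z1 z3 c1 cx x1' by auto
  have "th * P z1 + (1-th) * P z3 \<le> P z2"
  proof -
    have a: "(2*t-1) * (th * ln z1 + (1-th) * ln z3) \<le> (2*t-1) * ln z2"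
      using L1 t1 by (intro mult_left_mono) auto
    have b: "(1-t) * (th * ln (1-z1) + (1-th) * ln (1-z3)) \<le> (1-t) * ln (1-z2)"
      using L2 t2 by (intro mult_left_mono) auto
    show ?thesis using a b unfolding P_def by (simp add: algebra_simps)
  qed
  moreover have "(1-th) * P z3 > 0" using th1 P3 by simp
  ultimately show False using P1 P2 by simp
qed
definition G :: "real \<Rightarrow> nat \<Rightarrow> nat \<Rightarrow> (nat \<Rightarrow> real) \<Rightarrow> (nat \<Rightarrow> real) \<Rightarrow> nat \<Rightarrow> real" where
  "G t m n a b k = Max {(a r * b s) powr t | r s. r < m \<and> s < n \<and> r + s = k}"

definition S :: "real \<Rightarrow> nat \<Rightarrow> nat \<Rightarrow> (nat \<Rightarrow> real) \<Rightarrow> (nat \<Rightarrow> real) \<Rightarrow> real" where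
  "S t m n a b = (\<Sum>k<m+n-1. G t m n a b k)"

lemma G_fin:
  fixes m n :: nat and a b :: "nat \<Rightarrow> real"
  shows "finite {(a r * b s) powr t | r s. r < m \<and> s < n \<and> r + s = k}"
proof -
  have "{(a r * b s) powr t | r s. r < m \<and> s < n \<and> r + s = k}
        \<subseteq> (\<lambda>(r,s). (a r * b s) powr t) ` ({..<m} \<times> {..<n})" by auto
  moreover have "finite ((\<lambda>(r,s). (a r * b s) powr t) ` ({..<m} \<times> {..<n}))"
    by (intro finite_imageI finite_cartesian_product) auto
  ultimately show ?thesis by (rule finite_subset)
qed

lemma G_ge: "r < m \<Longrightarrow> s < n \<Longrightarrow> (a r * b s) powr t \<le> G t m n a b (r + s)"
  unfolding G_def by (rule Max_ge[OF G_fin]) auto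

lemma G_ex:
  assumes "k < m + n - 1" "1 \<le> m" "1 \<le> n"
  shows "\<exists>r s. r < m \<and> s < n \<and> r + s = k \<and> G t m n a b k = (a r * b s) powr t"
proof -
  define r where "r = min k (m - 1)"
  have "r < m" "k - r < n" "r + (k - r) = k" using assms unfolding r_def by auto
  then have ne: "{(a r * b s) powr t | r s. r < m \<and> s < n \<and> r + s = k} \<noteq> {}" by blast
  have "G t m n a b k \<in> {(a r * b s) powr t | r s. r < m \<and> s < n \<and> r + s = k}"
    unfolding G_def by (rule Max_in[OF G_fin ne])
  then show ?thesis by blast
qed

lemma G_nonneg:
  assumes "k < m + n - 1" "1 \<le> m" "1 \<le> n"
  shows "0 \<le> G t m n a b k"
  using G_ex[OF assms, of t a b] by auto

lemma S_nonneg: "1 \<le> m \<Longrightarrow> 1 \<le> n \<Longrightarrow> 0 \<le> S t m n a b"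
  unfolding S_def by (intro sum_nonneg) (auto intro: G_nonneg)

lemma powr_subadd:
  fixes x y t :: real
  assumes "0 \<le> x" "0 \<le> y" "0 < t" "t \<le> 1"
  shows "(x + y) powr t \<le> x powr t + y powr t"
proof (cases "x + y = 0")
  case True
  then show ?thesis using assms by auto
next
  case False
  define s where "s = x + y"
  have s: "0 < s" using False assms unfolding s_def by auto
  have ax: "x / s \<le> (x / s) powr t"
    using powr_mono'[of t 1 "x/s"] assms s by (auto simp: s_def field_simps)
  have ay: "y / s \<le> (y / s) powr t"
    using powr_mono'[of t 1 "y/s"] assms s by (auto simp: s_def field_simps)
  have "x powr t = s powr t * (x / s) powr t" using s by (simp add: powr_divide)
  moreover have "y powr t = s powr t * (y / s) powr t" using s by (simp add: powr_divide)
  ultimately have ge: "x powr t + y powr t \<ge> s powr t * (x / s) + s powr t * (y / s)"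
    using ax ay by (smt (verit) mult_left_mono powr_ge_zero)
  have "x / s + y / s = 1" using s by (simp add: s_def flip: add_divide_distrib)
  then have eq: "s powr t * (x / s) + s powr t * (y / s) = s powr t"
    by (metis distrib_left mult.right_neutral)
  show ?thesis using ge eq unfolding s_def by simp
qed

lemma sum_powr_le:
  fixes f :: "'a \<Rightarrow> real"
  assumes "finite A" "\<forall>i\<in>A. 0 \<le> f i" "0 < t" "t \<le> 1"
  shows "(sum f A) powr t \<le> (\<Sum>i\<in>A. f i powr t)"
  using assms
proof (induction A rule: finite_induct)
  case empty
  then show ?case by simp
next
  case (insert x F)
  have "(sum f (insert x F)) powr t = (f x + sum f F) powr t" using insert by simp
  also have "\<dots> \<le> f x powr t + (sum f F) powr t"
    using insert by (intro powr_subadd) (auto intro: sum_nonneg)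
  also have "\<dots> \<le> f x powr t + (\<Sum>i\<in>F. f i powr t)" using insert by auto
  finally show ?case using insert by simp
qed

lemma peel_a:
  assumes "2 \<le> m" "1 \<le> n"
  shows "(a 0 * b 0) powr t + S t (m-1) n (\<lambda>r. a (Suc r)) b \<le> S t m n a b"
proof -
  have e: "m + n - 1 = Suc (m - 1 + n - 1)" using assms by auto
  have "S t m n a b = G t m n a b 0 + (\<Sum>k<m - 1 + n - 1. G t m n a b (Suc k))"
    unfolding S_def e by (rule sum.lessThan_Suc_shift)
  moreover have "(a 0 * b 0) powr t \<le> G t m n a b 0"
    using G_ge[of 0 m 0 n a b t] assms by simp
  moreover have "S t (m-1) n (\<lambda>r. a (Suc r)) b \<le> (\<Sum>k<m - 1 + n - 1. G t m n a b (Suc k))"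
    unfolding S_def
  proof (rule sum_mono)
    fix k assume k: "k \<in> {..<m - 1 + n - 1}"
    have k': "k < m - 1 + n - 1" using k by simp
    have m1: "1 \<le> m - 1" using assms by simp
    obtain r s where rs: "r < m - 1" "s < n" "r + s = k"
      "G t (m-1) n (\<lambda>r. a (Suc r)) b k = (a (Suc r) * b s) powr t"
      using G_ex[OF k' m1 assms(2), of t "\<lambda>r. a (Suc r)" b] by blast
    have "(a (Suc r) * b s) powr t \<le> G t m n a b (Suc r + s)"
      using rs by (intro G_ge) auto
    then show "G t (m-1) n (\<lambda>r. a (Suc r)) b k \<le> G t m n a b (Suc k)" using rs by simp
  qed
  ultimately show ?thesis by linarith
qed

lemma peel_b:
  assumes "1 \<le> m" "2 \<le> n"
  shows "(a 0 * b 0) powr t + S t m (n-1) a (\<lambda>s. b (Suc s)) \<le> S t m n a b"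
proof -
  have e: "m + n - 1 = Suc (m + (n - 1) - 1)" using assms by auto
  have "S t m n a b = G t m n a b 0 + (\<Sum>k<m + (n - 1) - 1. G t m n a b (Suc k))"
    unfolding S_def e by (rule sum.lessThan_Suc_shift)
  moreover have "(a 0 * b 0) powr t \<le> G t m n a b 0"
    using G_ge[of 0 m 0 n a b t] assms by simp
  moreover have "S t m (n-1) a (\<lambda>s. b (Suc s)) \<le> (\<Sum>k<m + (n - 1) - 1. G t m n a b (Suc k))"
    unfolding S_def
  proof (rule sum_mono)
    fix k assume k: "k \<in> {..<m + (n - 1) - 1}"
    have k': "k < m + (n - 1) - 1" using k by simp
    have n1: "1 \<le> n - 1" using assms by simp
    obtain r s where rs: "r < m" "s < n - 1" "r + s = k"
      "G t m (n-1) a (\<lambda>s. b (Suc s)) k = (a r * b (Suc s)) powr t"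
      using G_ex[OF k' assms(1) n1, of t a "\<lambda>s. b (Suc s)"] by blast
    have "(a r * b (Suc s)) powr t \<le> G t m n a b (r + Suc s)"
      using rs by (intro G_ge) auto
    then show "G t m (n-1) a (\<lambda>s. b (Suc s)) k \<le> G t m n a b (Suc k)" using rs by simp
  qed
  ultimately show ?thesis by linarith
qed

lemma base_a:
  assumes "1 \<le> n" "0 < t" "t \<le> 1" "0 \<le> a 0" "\<forall>s<n. 0 \<le> b s"
  shows "(\<Sum>r<1. a r) powr t * (\<Sum>s<n. b s) powr t \<le> S t 1 n a b"
proof -
  have "(\<Sum>s<n. a 0 * b s) = a 0 * (\<Sum>s<n. b s)" by (simp add: sum_distrib_left)
  then have "(\<Sum>r<1. a r) powr t * (\<Sum>s<n. b s) powr t = (\<Sum>s<n. a 0 * b s) powr t"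
    by (simp add: powr_mult)
  also have "\<dots> \<le> (\<Sum>s<n. (a 0 * b s) powr t)"
    using assms by (intro sum_powr_le) auto
  also have "\<dots> \<le> (\<Sum>k<n. G t 1 n a b k)"
    using G_ge[of 0 1 _ n a b t] by (intro sum_mono) auto
  finally show ?thesis by (simp add: S_def)
qed

lemma base_b:
  assumes "1 \<le> m" "0 < t" "t \<le> 1" "0 \<le> b 0" "\<forall>r<m. 0 \<le> a r"
  shows "(\<Sum>r<m. a r) powr t * (\<Sum>s<1. b s) powr t \<le> S t m 1 a b"
proof -
  have "(\<Sum>r<m. a r * b 0) = (\<Sum>r<m. a r) * b 0" by (simp add: sum_distrib_right)
  then have "(\<Sum>r<m. a r) powr t * (\<Sum>s<1. b s) powr t = (\<Sum>r<m. a r * b 0) powr t"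
    by (simp add: powr_mult)
  also have "\<dots> \<le> (\<Sum>r<m. (a r * b 0) powr t)"
    using assms by (intro sum_powr_le) (auto intro: mult_nonneg_nonneg)
  also have "\<dots> \<le> (\<Sum>k<m. G t m 1 a b k)"
    using G_ge[of _ m 0 1 a b t] by (intro sum_mono) auto
  finally show ?thesis by (simp add: S_def)
qed

lemma key:
  fixes A B a0 b0 t :: real
  assumes "0 < A" "0 < B" "0 \<le> a0" "a0 \<le> A" "0 \<le> b0" "a0 / A \<le> b0 / B" "0 \<le> t"
    and h: "1 \<le> (a0/A) powr (2*t) + (1 - a0/A) powr t"
  shows "A powr t * B powr t \<le> (a0 * b0) powr t + (A - a0) powr t * B powr t"
proof -
  define x where "x = a0 / A"
  define y where "y = b0 / B"
  have x0: "0 \<le> x" and y0: "0 \<le> y" using assms by (auto simp: x_def y_def)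
  have a0e: "a0 = x * A" and b0e: "b0 = y * B" using assms by (auto simp: x_def y_def)
  have "x powr (2*t) = (x * x) powr t" by (simp add: powr_mult flip: powr_add)
  also have "\<dots> \<le> (x * y) powr t"
    using assms x0 by (intro powr_mono2 mult_left_mono) (auto simp: x_def y_def)
  finally have xy: "x powr (2*t) \<le> (x * y) powr t" .
  have "A powr t * B powr t \<le> (x powr (2*t) + (1 - x) powr t) * (A powr t * B powr t)"
    using mult_right_mono[OF h, of "A powr t * B powr t"] unfolding x_def by simp
  also have "\<dots> \<le> ((x * y) powr t + (1 - x) powr t) * (A powr t * B powr t)"
    using xy by (intro mult_right_mono) auto
  also have "\<dots> = (a0 * b0) powr t + (A - a0) powr t * B powr t"
    unfolding a0e b0e by (simp add: powr_mult algebra_simps flip: powr_mult)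
  finally show ?thesis .
qed


lemma sorted_main:
  fixes t :: real and M :: nat
  assumes t0: "0 < t" and t1: "t \<le> 1"
    and hyp: "\<And>x. 1 / real M \<le> x \<Longrightarrow> x \<le> 1 \<Longrightarrow> 1 \<le> x powr (2*t) + (1-x) powr t"
  shows "1 \<le> m \<Longrightarrow> m \<le> M \<Longrightarrow> 1 \<le> n \<Longrightarrow> n \<le> M \<Longrightarrow> (\<forall>r<m. 0 \<le> a r)
    \<Longrightarrow> (\<forall>r s. r \<le> s \<longrightarrow> s < m \<longrightarrow> a s \<le> a r) \<Longrightarrow> (\<forall>s<n. 0 \<le> b s)
    \<Longrightarrow> (\<forall>r s. r \<le> s \<longrightarrow> s < n \<longrightarrow> b s \<le> b r)
    \<Longrightarrow> (\<Sum>r<m. a r) powr t * (\<Sum>s<n. b s) powr t \<le> S t m n a b"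
proof (induction "m+n" arbitrary: m n a b rule: less_induct)
  case less
  show ?case
  proof (cases "m = 1")
    case True
    then show ?thesis using base_a[of n t a b] less.prems t0 t1 by auto
  next
    case m1: False
    show ?thesis
    proof (cases "n = 1")
      case True
      then show ?thesis using base_b[of m t b a] less.prems t0 t1 by auto
    next
      case n1: False
      have m2: "2 \<le> m" and n2: "2 \<le> n" using m1 n1 less.prems by auto
      define A where "A = (\<Sum>r<m. a r)"
      define B where "B = (\<Sum>s<n. b s)"
      have A0: "0 \<le> A" unfolding A_def using less.prems by (intro sum_nonneg) auto
      have B0: "0 \<le> B" unfolding B_def using less.prems by (intro sum_nonneg) auto
      show ?thesis
      proof (cases "A = 0 \<or> B = 0")
        case True
        then show ?thesis using S_nonneg[of m n t a b] less.prems
          unfolding A_def[symmetric] B_def[symmetric] by auto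
      next
        case False
        then have Ap: "0 < A" and Bp: "0 < B" using A0 B0 by auto
        have a0A: "a 0 \<le> A" unfolding A_def using less.prems
          by (intro member_le_sum) auto
        have b0B: "b 0 \<le> B" unfolding B_def using less.prems
          by (intro member_le_sum) auto
        have Aa: "A \<le> real m * a 0"
        proof -
          have "A \<le> (\<Sum>r<m. a 0)" unfolding A_def using less.prems by (intro sum_mono) auto
          then show ?thesis by simp
        qed
        have Bb: "B \<le> real n * b 0"
        proof -
          have "B \<le> (\<Sum>s<n. b 0)" unfolding B_def using less.prems by (intro sum_mono) auto
          then show ?thesis by simp
        qed
        have xlow: "1 / real M \<le> a 0 / A"
        proof -
          have "1 / real M \<le> 1 / real m" using less.prems m2 by (intro divide_left_mono) auto
          also have "1 / real m \<le> a 0 / A" using Aa Ap m2 by (simp add: field_simps)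
          finally show ?thesis .
        qed
        have ylow: "1 / real M \<le> b 0 / B"
        proof -
          have "1 / real M \<le> 1 / real n" using less.prems n2 by (intro divide_left_mono) auto
          also have "1 / real n \<le> b 0 / B" using Bb Bp n2 by (simp add: field_simps)
          finally show ?thesis .
        qed
        have xup: "a 0 / A \<le> 1" using a0A Ap by simp
        have yup: "b 0 / B \<le> 1" using b0B Bp by simp
        have a00: "0 \<le> a 0" and b00: "0 \<le> b 0" using less.prems m2 n2 by auto
        show ?thesis
        proof (cases "a 0 / A \<le> b 0 / B")
          case True
          have sA: "(\<Sum>r<m-1. a (Suc r)) = A - a 0"
          proof -
            have "A = (\<Sum>r<Suc (m-1). a r)" using m2 by (simp add: A_def)
            also have "\<dots> = a 0 + (\<Sum>r<m-1. a (Suc r))" by (rule sum.lessThan_Suc_shift)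
            finally show ?thesis by simp
          qed
          have IH: "(\<Sum>r<m-1. a (Suc r)) powr t * B powr t \<le> S t (m-1) n (\<lambda>r. a (Suc r)) b"
            unfolding B_def
            by (rule less.hyps[of "m-1" n "\<lambda>r. a (Suc r)" b]) (use less.prems m2 in auto)
          have "A powr t * B powr t \<le> (a 0 * b 0) powr t + (A - a 0) powr t * B powr t"
            by (rule key) (use Ap Bp a00 a0A b00 True t0 hyp[OF xlow xup] in auto)
          also have "\<dots> \<le> (a 0 * b 0) powr t + S t (m-1) n (\<lambda>r. a (Suc r)) b"
            using IH sA by simp
          also have "\<dots> \<le> S t m n a b" using peel_a[OF m2, of n a b t] less.prems by simp
          finally show ?thesis unfolding A_def B_def .
        next
          case False
          have sB: "(\<Sum>s<n-1. b (Suc s)) = B - b 0"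
          proof -
            have "B = (\<Sum>s<Suc (n-1). b s)" using n2 by (simp add: B_def)
            also have "\<dots> = b 0 + (\<Sum>s<n-1. b (Suc s))" by (rule sum.lessThan_Suc_shift)
            finally show ?thesis by simp
          qed
          have IH: "A powr t * (\<Sum>s<n-1. b (Suc s)) powr t \<le> S t m (n-1) a (\<lambda>s. b (Suc s))"
            unfolding A_def
            by (rule less.hyps[of m "n-1" a "\<lambda>s. b (Suc s)"]) (use less.prems n2 in auto)
          have "B powr t * A powr t \<le> (b 0 * a 0) powr t + (B - b 0) powr t * A powr t"
            by (rule key) (use Ap Bp a00 b0B b00 False t0 hyp[OF ylow yup] in auto)
          then have "A powr t * B powr t \<le> (a 0 * b 0) powr t + A powr t * (B - b 0) powr t"
            by (simp add: mult.commute)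
          also have "\<dots> \<le> (a 0 * b 0) powr t + S t m (n-1) a (\<lambda>s. b (Suc s))"
            using IH sB by simp
          also have "\<dots> \<le> S t m n a b" using peel_b[OF _ n2, of m a b t] less.prems by simp
          finally show ?thesis unfolding A_def B_def .
        qed
      qed
    qed
  qed
qed

lemma sumset_card:
  fixes I J :: "nat set"
  assumes "finite I" "finite J" "I \<noteq> {}" "J \<noteq> {}"
  shows "card I + card J \<le> card {i + j | i j. i \<in> I \<and> j \<in> J} + 1"
proof -
  define p where "p = Max I"
  define q where "q = Min J"
  have pI: "p \<in> I" and qJ: "q \<in> J" using assms by (auto simp: p_def q_def)
  have ple: "\<And>i. i \<in> I \<Longrightarrow> i \<le> p" using assms by (auto simp: p_def)
  have qge: "\<And>j. j \<in> J \<Longrightarrow> q \<le> j" using assms by (auto simp: q_def)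
  define X where "X = (\<lambda>i. i + q) ` I"
  define Y where "Y = (\<lambda>j. p + j) ` J"
  have cX: "card X = card I" unfolding X_def by (rule card_image) (auto simp: inj_on_def)
  have cY: "card Y = card J" unfolding Y_def by (rule card_image) (auto simp: inj_on_def)
  have fX: "finite X" and fY: "finite Y" using assms by (auto simp: X_def Y_def)
  have XY: "X \<inter> Y \<subseteq> {p + q}"
  proof
    fix z assume "z \<in> X \<inter> Y"
    then obtain i j where "i \<in> I" "j \<in> J" "z = i + q" "z = p + j" unfolding X_def Y_def by auto
    then show "z \<in> {p + q}" using ple qge by force
  qed
  have "card (X \<inter> Y) \<le> 1" using card_mono[OF _ XY] by simp
  moreover have "card X + card Y = card (X \<union> Y) + card (X \<inter> Y)" by (rule card_Un_Int[OF fX fY])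
  moreover have "card (X \<union> Y) \<le> card {i + j | i j. i \<in> I \<and> j \<in> J}"
  proof (rule card_mono)
    have "{i + j | i j. i \<in> I \<and> j \<in> J} = (\<lambda>(i,j). i + j) ` (I \<times> J)" by auto
    then show "finite {i + j | i j. i \<in> I \<and> j \<in> J}" using assms by simp
    show "X \<union> Y \<subseteq> {i + j | i j. i \<in> I \<and> j \<in> J}" unfolding X_def Y_def using pI qJ by auto
  qed
  ultimately show ?thesis using cX cY by linarith
qed

lemma major:
  fixes H g :: "nat \<Rightarrow> real"
  assumes H0: "\<And>u. u < K \<Longrightarrow> 0 \<le> H u"
    and cnt: "\<And>k. k < K \<Longrightarrow> k + 1 \<le> card {u. u < K \<and> g k \<le> H u}"
  shows "(\<Sum>k<K. g k) \<le> (\<Sum>u<K. H u)"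
proof -
  have "\<exists>F. F \<subseteq> {..<K} \<and> card F = j \<and> (\<Sum>k<j. g k) \<le> (\<Sum>u\<in>F. H u)" if "j \<le> K" for j
    using that
  proof (induction j)
    case 0
    then show ?case by (intro exI[of _ "{}"]) auto
  next
    case (Suc j)
    then obtain F where F: "F \<subseteq> {..<K}" "card F = j" "(\<Sum>k<j. g k) \<le> (\<Sum>u\<in>F. H u)" by auto
    have fin: "finite F" using F(1) finite_subset by blast
    define T where "T = {u. u < K \<and> g j \<le> H u}"
    have cT: "j + 1 \<le> card T" unfolding T_def using cnt Suc.prems by auto
    have "\<not> T \<subseteq> F"
    proof
      assume "T \<subseteq> F"
      then have "card T \<le> card F" using card_mono fin by blast
      then show False using cT F(2) by simp
    qed
    then obtain u where u: "u \<in> T" "u \<notin> F" by blast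
    show ?case
    proof (intro exI[of _ "insert u F"] conjI)
      show "insert u F \<subseteq> {..<K}" using F(1) u unfolding T_def by auto
      show "card (insert u F) = Suc j" using fin u F(2) by simp
      have "(\<Sum>k<Suc j. g k) = (\<Sum>k<j. g k) + g j" by simp
      also have "\<dots> \<le> (\<Sum>u\<in>F. H u) + H u" using F(3) u unfolding T_def by simp
      also have "\<dots> = (\<Sum>u\<in>insert u F. H u)" using fin u by simp
      finally show "(\<Sum>k<Suc j. g k) \<le> (\<Sum>u\<in>insert u F. H u)" .
    qed
  qed
  then obtain F where F: "F \<subseteq> {..<K}" "(\<Sum>k<K. g k) \<le> (\<Sum>u\<in>F. H u)" by auto
  have "(\<Sum>u\<in>F. H u) \<le> (\<Sum>u<K. H u)" using F(1) H0 by (intro sum_mono2) auto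
  then show ?thesis using F(2) by linarith
qed

lemma sorted_rearr:
  fixes U :: "nat \<Rightarrow> real"
  assumes U0: "\<And>k. k < M \<Longrightarrow> 0 \<le> U k"
  shows "\<exists>a. (\<forall>r<M. 0 \<le> a r) \<and> (\<forall>r s. r \<le> s \<longrightarrow> s < M \<longrightarrow> a s \<le> a r)
     \<and> (\<Sum>r<M. a r) = (\<Sum>k<M. U k) \<and> (\<forall>r<M. r + 1 \<le> card {k. k < M \<and> a r \<le> U k})"
proof -
  define xs where "xs = map U [0..<M]"
  define ys where "ys = rev (sort xs)"
  have lys: "length ys = M" by (simp add: ys_def xs_def)
  have mys: "mset ys = mset xs" by (simp add: ys_def)
  have sys: "sorted (rev ys)" by (simp add: ys_def)
  have setys: "set ys = set xs" using mys by (metis set_mset_mset)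
  show ?thesis
  proof (intro exI[of _ "\<lambda>r. ys ! r"] conjI allI impI)
    fix r assume r: "r < M"
    then have "ys ! r \<in> set xs" using setys lys by (metis nth_mem)
    then show "0 \<le> ys ! r" using U0 by (auto simp: xs_def)
  next
    fix r s assume "r \<le> s" "s < M"
    then show "ys ! s \<le> ys ! r" using sorted_rev_nth_mono[OF sys] lys by auto
  next
    have "(\<Sum>r<M. ys ! r) = sum_list ys" using lys by (simp add: sum_list_sum_nth atLeast0LessThan)
    also have "\<dots> = sum_list xs" using mys by (metis sum_mset_sum_list)
    also have "\<dots> = (\<Sum>k<M. U k)" by (simp add: xs_def sum_list_sum_nth atLeast0LessThan)
    finally show "(\<Sum>r<M. ys ! r) = (\<Sum>k<M. U k)" .
  next
    fix r assume r: "r < M"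
    define P where "P = (\<lambda>v::real. ys ! r \<le> v)"
    have "card {k. k < M \<and> ys ! r \<le> U k} = card {i. i < length xs \<and> P (xs ! i)}"
      by (rule arg_cong[where f=card]) (auto simp: xs_def P_def)
    also have "\<dots> = length (filter P xs)" by (simp add: length_filter_conv_card)
    also have "\<dots> = length (filter P ys)"
    proof -
      have "mset (filter P xs) = mset (filter P ys)" using mys by simp
      then show ?thesis by (metis size_mset)
    qed
    also have "\<dots> = card {i. i < M \<and> P (ys ! i)}" by (simp add: length_filter_conv_card lys)
    finally have eq: "card {k. k < M \<and> ys ! r \<le> U k} = card {i. i < M \<and> P (ys ! i)}" .
    have "{..r} \<subseteq> {i. i < M \<and> P (ys ! i)}"
      using r sorted_rev_nth_mono[OF sys] lys by (auto simp: P_def)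
    then have "card {..r} \<le> card {i. i < M \<and> P (ys ! i)}" by (intro card_mono) auto
    then show "r + 1 \<le> card {k. k < M \<and> ys ! r \<le> U k}" using eq by simp
  qed
qed

lemma tau_props:
  assumes M2: "M \<ge> (2::nat)"
  shows "1/2 \<le> tau M \<and> tau M < 1 \<and>
    (1 / real M) powr (2 * tau M) + ((real M - 1) / real M) powr (tau M) = 1"
proof -
  define p where "p = 1 / real M"
  define q where "q = (real M - 1) / real M"
  define f where "f = (\<lambda>t. p powr (2*t) + q powr t)"
  have p0: "0 < p" "p < 1" using M2 by (auto simp: p_def)
  have q0: "0 < q" "q < 1" using M2 by (auto simp: q_def field_simps)
  have pq: "p + q = 1" using M2 by (simp add: p_def q_def field_simps)
  have mono: "f t2 < f t1" if "t1 < t2" for t1 t2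
  proof -
    have "p powr (2*t2) < p powr (2*t1)" using p0 that by (intro powr_less_mono') auto
    moreover have "q powr t2 < q powr t1" using q0 that by (intro powr_less_mono') auto
    ultimately show ?thesis by (simp add: f_def)
  qed
  have fh: "1 \<le> f (1/2)"
  proof -
    have "q powr 1 \<le> q powr (1/2)" using q0 by (intro powr_mono') auto
    then show ?thesis using p0 q0 pq by (simp add: f_def)
  qed
  have f1: "f 1 < 1"
  proof -
    have "p powr (2*1) < p powr 1" using p0 by (intro powr_less_mono') auto
    then show ?thesis using p0 q0 pq by (simp add: f_def)
  qed
  have cont: "isCont f x" for x using p0 q0 unfolding f_def by (intro continuous_intros) auto
  obtain t0 where t0: "1/2 \<le> t0" "t0 \<le> 1" "f t0 = 1"
    using IVT2[of f 1 1 "1/2"] f1 fh cont by auto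
  have t0': "t0 < 1" using t0 f1 by (cases "t0 = 1") auto
  have uniq: "t = t0" if "f t = 1" for t
  proof (rule ccontr)
    assume "t \<noteq> t0"
    then have "t < t0 \<or> t0 < t" by auto
    then show False using mono[of t t0] mono[of t0 t] that t0 by auto
  qed
  have P: "(\<lambda>t. t > 0 \<and> (1 / real M) powr (2 * t) + ((real M - 1) / real M) powr t = 1)
        = (\<lambda>t. t > 0 \<and> f t = 1)" unfolding f_def p_def q_def ..
  have ex1: "\<exists>!t. t > 0 \<and> f t = 1"
  proof (rule ex1I[of _ t0])
    show "t0 > 0 \<and> f t0 = 1" using t0 by simp
    show "\<And>t. t > 0 \<and> f t = 1 \<Longrightarrow> t = t0" using uniq by blast
  qed
  have "tau M = t0" unfolding tau_def P
    by (rule the1_equality[OF ex1]) (use t0 in simp)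
  moreover have "f t0 = (1 / real M) powr (2 * t0) + ((real M - 1) / real M) powr t0"
    unfolding f_def p_def q_def ..
  ultimately show ?thesis using t0 t0' by simp
qed

theorem lemma8:
  fixes M :: nat and U V :: "nat \<Rightarrow> real"
  assumes "M \<ge> 2"
    and "\<And>k. k < M \<Longrightarrow> U k \<ge> 0"
    and "\<And>k. k < M \<Longrightarrow> V k \<ge> 0"
  shows "(\<Sum>m\<le>2 * M - 2. Max {(U k * V l) powr tau M | k l.
              k < M \<and> l < M \<and> k + l = m})
         \<ge> (\<Sum>k<M. U k) powr tau M * (\<Sum>l<M. V l) powr tau M"
proof -
  define t where "t = tau M"
  have t1: "1/2 \<le> t" "t < 1"
    and teq: "(1/real M) powr (2*t) + ((real M - 1)/real M) powr t = 1"
    using tau_props[OF assms(1)] by (auto simp: t_def)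
  have tpos: "0 < t" using t1 by simp
  have hyp: "1 \<le> x powr (2*t) + (1-x) powr t" if "1/real M \<le> x" "x \<le> 1" for x
  proof -
    have "1 - 1/real M = (real M - 1)/real M" using assms(1) by (simp add: field_simps)
    then have "(1/real M) powr (2*t) + (1 - 1/real M) powr t = 1" using teq by simp
    moreover have c0: "0 < 1/real M" "1/real M < 1" using assms(1) by auto
    ultimately show ?thesis using h_ineq[OF t1 c0 _ that] by blast
  qed
  obtain a where a: "\<forall>r<M. 0 \<le> a r" "\<forall>r s. r \<le> s \<longrightarrow> s < M \<longrightarrow> a s \<le> a r"
     "(\<Sum>r<M. a r) = (\<Sum>k<M. U k)" "\<forall>r<M. r + 1 \<le> card {k. k < M \<and> a r \<le> U k}"
    using sorted_rearr[of M U] assms(2) by blast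
  obtain b where b: "\<forall>r<M. 0 \<le> b r" "\<forall>r s. r \<le> s \<longrightarrow> s < M \<longrightarrow> b s \<le> b r"
     "(\<Sum>r<M. b r) = (\<Sum>k<M. V k)" "\<forall>r<M. r + 1 \<le> card {k. k < M \<and> b r \<le> V k}"
    using sorted_rearr[of M V] assms(3) by blast
  define K where "K = M + M - 1"
  have setK: "{..2*M-2} = {..<K}" using assms(1) by (auto simp: K_def)
  have LHS: "(\<Sum>m\<le>2 * M - 2. Max {(U k * V l) powr tau M | k l. k < M \<and> l < M \<and> k + l = m})
     = (\<Sum>u<K. G t M M U V u)"
    unfolding setK G_def t_def ..
  have cnt: "k + 1 \<le> card {u. u < K \<and> G t M M a b k \<le> G t M M U V u}" if k: "k < K" for k
  proof -
    obtain r s where rs: "r < M" "s < M" "r + s = k" "G t M M a b k = (a r * b s) powr t"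
      using G_ex[of k M M t a b] k assms(1) by (auto simp: K_def)
    define I where "I = {i. i < M \<and> a r \<le> U i}"
    define J where "J = {j. j < M \<and> b s \<le> V j}"
    have cI: "r + 1 \<le> card I" using a(4) rs by (auto simp: I_def)
    have cJ: "s + 1 \<le> card J" using b(4) rs by (auto simp: J_def)
    have fI: "finite I" and fJ: "finite J" by (auto simp: I_def J_def)
    have nI: "I \<noteq> {}" using cI by auto
    have nJ: "J \<noteq> {}" using cJ by auto
    have sub: "{i + j | i j. i \<in> I \<and> j \<in> J} \<subseteq> {u. u < K \<and> G t M M a b k \<le> G t M M U V u}"
    proof
      fix z assume "z \<in> {i + j | i j. i \<in> I \<and> j \<in> J}"
      then obtain i j where ij: "i \<in> I" "j \<in> J" "z = i + j" by auto
      have iM: "i < M" and jM: "j < M" using ij by (auto simp: I_def J_def)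
      have zK: "z < K" using iM jM ij by (auto simp: K_def)
      have "(a r * b s) powr t \<le> (U i * V j) powr t"
        using ij a(1) b(1) rs assms(2)[OF iM] tpos
        by (intro powr_mono2 mult_mono) (auto simp: I_def J_def)
      also have "\<dots> \<le> G t M M U V (i + j)" using iM jM by (rule G_ge)
      finally show "z \<in> {u. u < K \<and> G t M M a b k \<le> G t M M U V u}" using zK ij rs by auto
    qed
    have "card {i + j | i j. i \<in> I \<and> j \<in> J} \<le> card {u. u < K \<and> G t M M a b k \<le> G t M M U V u}"
      by (rule card_mono[OF _ sub]) simp
    then show ?thesis using sumset_card[OF fI fJ nI nJ] cI cJ rs by linarith
  qed
  have H0: "0 \<le> G t M M U V u" if "u < K" for u
    using that assms(1) by (intro G_nonneg) (auto simp: K_def)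
  have maj: "(\<Sum>k<K. G t M M a b k) \<le> (\<Sum>u<K. G t M M U V u)"
    by (rule major[OF H0 cnt])
  have sm: "(\<Sum>r<M. a r) powr t * (\<Sum>s<M. b s) powr t \<le> S t M M a b"
    using sorted_main[of t M M M a b, OF tpos _ hyp] a b assms(1) t1 by simp
  have Seq: "S t M M a b = (\<Sum>k<K. G t M M a b k)" by (simp add: S_def K_def)
  have e1: "(\<Sum>k<M. U k) powr t * (\<Sum>l<M. V l) powr t = (\<Sum>r<M. a r) powr t * (\<Sum>s<M. b s) powr t"
    using a(3) b(3) by simp
  have fin: "(\<Sum>k<M. U k) powr t * (\<Sum>l<M. V l) powr t \<le> (\<Sum>u<K. G t M M U V u)"
    using sm maj Seq e1 by linarith
  have L2: "(\<Sum>m\<le>2 * M - 2. Max {(U k * V l) powr tau M | k l. k < M \<and> l < M \<and> k + l = m})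
     = (\<Sum>u<K. G (tau M) M M U V u)" using LHS unfolding t_def .
  have F2: "(\<Sum>k<M. U k) powr tau M * (\<Sum>l<M. V l) powr tau M \<le> (\<Sum>u<K. G (tau M) M M U V u)"
    using fin unfolding t_def .
  show ?thesis unfolding L2 by (rule F2)
qed

end
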